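(* Consider a finite super-modular game with player set $\mathcal V$ and binary action sets $\{\pm1\}$. Then for every configuration $x\in\mathcal X$: (i) $f^-(f^+(x))$ and $f^+(f^-(x))$ are equilibria, and they are respectively the greatest and the least equilibria that are I-reachable from $x$; (ii) $f^-(g^+(x))$ and $f^+(g^-(x))$ are equilibria, and they are respectively the greatest and the least equilibria that are BR-reachable from $x$; (iii) if $x\in\mathcal X^*$, then $g^+(x)$ and $g^-(x)$ are equilibria, and they are respectively the greatest and the least equilibria BR-reachable from $x$. Moreover: (iv) the set of equilibria $\mathcal X^*$ is a nonempty complete lattice (for the componentwise order) and is globally I-stable; (v) $\underline x^*=f^+(g^-(-\mathbf 1))=f^+(-\mathbf 1)$ and $\overline x^*=f^-(g^+(+\mathbf 1))=f^-(+\mathbf 1)$ are respectively the least and the greatest equilibria; (vi) for any two equilibria $x,y\in\mathcal X^*$, $f^+(x\vee y)$ is the least equilibrium that is $\ge$ both $x$ and $y$, and $f^-(x\wedge y)$ is the greatest equilibrium that is $\le$ both $x$ and $y$; (vii) if $\underline x^*=\overline x^*=x^*$, then $\mathcal X^*=\{x^*\}$ is globally BR-stable.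
   Context: Game: finite player set $\mathcal V$, each player has action set $\{-1,+1\}$, configurations $x\in\mathcal X=\{-1,+1\}^{\mathcal V}$, utilities $u_i:\mathcal X\to\mathbb R$; write $u_i(x)=u_i(x_i,x_{-i})$. Best response: $\mathcal B_i(x_{-i})=\arg\max_{x_i\in\{\pm1\}}u_i(x_i,x_{-i})$. An equilibrium is $x^*$ with $x_i^*\in\mathcal B_i(x^*_{-i})$ for all $i$; $\mathcal X^*$ is the set of equilibria. The game is super-modular if for every $i$, $u_i(1,x_{-i})-u_i(-1,x_{-i})\ge u_i(1,y_{-i})-u_i(-1,y_{-i})$ whenever $x_{-i}\ge y_{-i}$ (componentwise order). $x\vee y$, $x\wedge y$ are the entrywise max and min; $\bigvee L,\bigwedge L$ those of a set. Paths: a length-$l$ admissible path from $x$ to $y$ is $(x^{(0)},\dots,x^{(l)})$ with $x^{(0)}=x$, $x^{(l)}=y$, and for each $k=1,\dots,l$ a player $i_k$ with $x^{(k)}_{-i_k}=x^{(k-1)}_{-i_k}$ and $x^{(k)}_{i_k}\ne x^{(k-1)}_{i_k}$ (length $0$ allowed). It is an I-path if $u_{i_k}(x^{(k)})>u_{i_k}(x^{(k-1)})$ for all $k$, a BR-path if $u_{i_k}(x^{(k)})\ge u_{i_k}(x^{(k-1)})$ for all $k$; monotone if $x^{(0)}\lneq x^{(1)}\lneq\cdots\lneq x^{(l)}$, anti-monotone if $x^{(0)}\gneq\cdots\gneq x^{(l)}$ (where $x\lneq y$ means $x\le y$, $x\neq y$). For $\alpha\in\{\mathrm{I},\mathrm{BR}\}$: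 $\mathcal Y\subseteq\mathcal X$ is $\alpha$-reachable from $x$ if there is an $\alpha$-path from $x$ to some $y\in\mathcal Y$; globally $\alpha$-reachable if $\alpha$-reachable from every $x$; $\alpha$-invariant if there is no $\alpha$-path from any $y\in\mathcal Y$ to any $z\notin\mathcal Y$; globally $\alpha$-stable if globally $\alpha$-reachable and $\alpha$-invariant. A configuration $y$ is I-reachable (BR-reachable) from $x$ if $\{y\}$ is. Maps: $f^+(x)=\bigvee\{y: y$ reachable from $x$ by a monotone I-path$\}$, $f^-(x)=\bigwedge\{y: y$ reachable from $x$ by an anti-monotone I-path$\}$, $g^+(x)=\bigvee\{y: y$ reachable from $x$ by a monotone BR-path$\}$, $g^-(x)=\bigwedge\{y: y$ reachable from $x$ by an anti-monotone BR-path$\}$. *)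

theory Defs
  imports Complex_Main
begin

text \<open>The order on configurations
 is the pointwise order on functions; x \<squnion> y (sup) is the entrywise max.\<close>

type_synonym 'v cfg = "'v \<Rightarrow> int"
type_synonym 'v game = "'v \<Rightarrow> 'v cfg \<Rightarrow> real"

definition is_cfg :: "'v cfg \<Rightarrow> bool" where
  "is_cfg x \<longleftrightarrow> (\<forall>i. x i \<in> {-1, 1})"

definition supermodular :: "'v game \<Rightarrow> bool" where
  "supermodular u \<longleftrightarrow>
     (\<forall>i x y. is_cfg x \<and> is_cfg y \<and> (\<forall>j. j \<noteq> i \<longrightarrow> y j \<le> x j) \<longrightarrow>
        u i (x(i := 1)) - u i (x(i := -1)) \<ge> u i (y(i := 1)) - u i (y(i := -1)))"

definition best_resp :: "'v game \<Rightarrow> 'v \<Rightarrow> 'v cfg \<Rightarrow> int set" where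
  "best_resp u i x = {a \<in> {-1, 1}. \<forall>b \<in> {-1, 1}. u i (x(i := b)) \<le> u i (x(i := a))}"

definition equilibria :: "'v game \<Rightarrow> 'v cfg set" where
  "equilibria u = {x. is_cfg x \<and> (\<forall>i. x i \<in> best_resp u i x)}"

definition adm_step :: "'v \<Rightarrow> 'v cfg \<Rightarrow> 'v cfg \<Rightarrow> bool" where
  "adm_step i x y \<longleftrightarrow> is_cfg x \<and> is_cfg y \<and> y i \<noteq> x i \<and> (\<forall>j. j \<noteq> i \<longrightarrow> y j = x j)"

definition I_step :: "'v game \<Rightarrow> 'v cfg \<Rightarrow> 'v cfg \<Rightarrow> bool" where
  "I_step u x y \<longleftrightarrow> (\<exists>i. adm_step i x y \<and> u i y > u i x)"

definition BR_step :: "'v game \<Rightarrow> 'v cfg \<Rightarrow> 'v cfg \<Rightarrow> bool" where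
  "BR_step u x y \<longleftrightarrow> (\<exists>i. adm_step i x y \<and> u i y \<ge> u i x)"

definition I_reach :: "'v game \<Rightarrow> 'v cfg \<Rightarrow> 'v cfg \<Rightarrow> bool" where
  "I_reach u = (I_step u)\<^sup>*\<^sup>*"

definition BR_reach :: "'v game \<Rightarrow> 'v cfg \<Rightarrow> 'v cfg \<Rightarrow> bool" where
  "BR_reach u = (BR_step u)\<^sup>*\<^sup>*"

definition I_reach_mono :: "'v game \<Rightarrow> 'v cfg \<Rightarrow> 'v cfg \<Rightarrow> bool" where
  "I_reach_mono u = (\<lambda>x y. I_step u x y \<and> x < y)\<^sup>*\<^sup>*"

definition I_reach_anti :: "'v game \<Rightarrow> 'v cfg \<Rightarrow> 'v cfg \<Rightarrow> bool" where
  "I_reach_anti u = (\<lambda>x y. I_step u x y \<and> y < x)\<^sup>*\<^sup>*"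

definition BR_reach_mono :: "'v game \<Rightarrow> 'v cfg \<Rightarrow> 'v cfg \<Rightarrow> bool" where
  "BR_reach_mono u = (\<lambda>x y. BR_step u x y \<and> x < y)\<^sup>*\<^sup>*"

definition BR_reach_anti :: "'v game \<Rightarrow> 'v cfg \<Rightarrow> 'v cfg \<Rightarrow> bool" where
  "BR_reach_anti u = (\<lambda>x y. BR_step u x y \<and> y < x)\<^sup>*\<^sup>*"

text \<open>Entrywise max / min of a (finite, nonempty) set of configurations.\<close>
definition bigjoin :: "'v cfg set \<Rightarrow> 'v cfg" where
  "bigjoin L = (\<lambda>i. Max ((\<lambda>y. y i) ` L))"

definition bigmeet :: "'v cfg set \<Rightarrow> 'v cfg" where
  "bigmeet L = (\<lambda>i. Min ((\<lambda>y. y i) ` L))"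

definition f_plus :: "'v game \<Rightarrow> 'v cfg \<Rightarrow> 'v cfg" where
  "f_plus u x = bigjoin {y. I_reach_mono u x y}"

definition f_minus :: "'v game \<Rightarrow> 'v cfg \<Rightarrow> 'v cfg" where
  "f_minus u x = bigmeet {y. I_reach_anti u x y}"

definition g_plus :: "'v game \<Rightarrow> 'v cfg \<Rightarrow> 'v cfg" where
  "g_plus u x = bigjoin {y. BR_reach_mono u x y}"

definition g_minus :: "'v game \<Rightarrow> 'v cfg \<Rightarrow> 'v cfg" where
  "g_minus u x = bigmeet {y. BR_reach_anti u x y}"

definition is_greatest :: "'v cfg set \<Rightarrow> 'v cfg \<Rightarrow> bool" where
  "is_greatest S z \<longleftrightarrow> z \<in> S \<and> (\<forall>w \<in> S. w \<le> z)"

definition is_least :: "'v cfg set \<Rightarrow> 'v cfg \<Rightarrow> bool" where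
  "is_least S z \<longleftrightarrow> z \<in> S \<and> (\<forall>w \<in> S. z \<le> w)"

definition complete_lattice_on :: "'v cfg set \<Rightarrow> bool" where
  "complete_lattice_on S \<longleftrightarrow>
     (\<forall>A \<subseteq> S. (\<exists>s. is_least {t \<in> S. \<forall>a \<in> A. a \<le> t} s)
              \<and> (\<exists>s. is_greatest {t \<in> S. \<forall>a \<in> A. t \<le> a} s))"

definition globally_reachable :: "('v cfg \<Rightarrow> 'v cfg \<Rightarrow> bool) \<Rightarrow> 'v cfg set \<Rightarrow> bool" where
  "globally_reachable R Y \<longleftrightarrow> (\<forall>x. is_cfg x \<longrightarrow> (\<exists>y \<in> Y. R x y))"

definition invariant :: "('v cfg \<Rightarrow> 'v cfg \<Rightarrow> bool) \<Rightarrow> 'v cfg set \<Rightarrow> bool" where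
  "invariant R Y \<longleftrightarrow> (\<forall>y \<in> Y. \<forall>z. R y z \<longrightarrow> z \<in> Y)"

definition globally_stable :: "('v cfg \<Rightarrow> 'v cfg \<Rightarrow> bool) \<Rightarrow> 'v cfg set \<Rightarrow> bool" where
  "globally_stable R Y \<longleftrightarrow> globally_reachable R Y \<and> invariant R Y"

end

theory Submission imports Defs begin

definition D :: "'v game \<Rightarrow> 'v \<Rightarrow> 'v cfg \<Rightarrow> real" where
  "D u i x = u i (x(i:=1)) - u i (x(i:=-1))"

definition ustep :: "'v game \<Rightarrow> (real \<Rightarrow> bool) \<Rightarrow> 'v cfg \<Rightarrow> 'v cfg \<Rightarrow> bool" where
  "ustep u P x y \<longleftrightarrow> is_cfg x \<and> (\<exists>i. x i = -1 \<and> y = x(i:=1) \<and> P (D u i x))"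

definition dstep :: "'v game \<Rightarrow> (real \<Rightarrow> bool) \<Rightarrow> 'v cfg \<Rightarrow> 'v cfg \<Rightarrow> bool" where
  "dstep u P x y \<longleftrightarrow> is_cfg x \<and> (\<exists>i. x i = 1 \<and> y = x(i:=-1) \<and> P (D u i x))"

definition ustable0 :: "'v game \<Rightarrow> 'v cfg \<Rightarrow> bool" where
  "ustable0 u x \<longleftrightarrow> (\<forall>i. x i = -1 \<longrightarrow> D u i x \<le> 0)"
definition dstable0 :: "'v game \<Rightarrow> 'v cfg \<Rightarrow> bool" where
  "dstable0 u x \<longleftrightarrow> (\<forall>i. x i = 1 \<longrightarrow> 0 \<le> D u i x)"

lemma D_upd[simp]: "D u i (x(i:=a)) = D u i x"
  by (simp add: D_def)

lemma cfg_upd[simp]: "is_cfg x \<Longrightarrow> a \<in> {-1,1} \<Longrightarrow> is_cfg (x(i:=a))"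
  by (auto simp: is_cfg_def)

lemma cfg_cases: "is_cfg x \<Longrightarrow> x i = -1 \<or> x i = 1"
  by (auto simp: is_cfg_def)

lemma cfg_sup: "is_cfg x \<Longrightarrow> is_cfg y \<Longrightarrow> is_cfg (sup x y)"
  unfolding is_cfg_def sup_fun_def by (metis sup_int_def max_def)
lemma cfg_inf: "is_cfg x \<Longrightarrow> is_cfg y \<Longrightarrow> is_cfg (inf x y)"
  unfolding is_cfg_def inf_fun_def by (metis inf_int_def min_def)

lemma finite_cfgs: "finite {x::('v::finite) cfg. is_cfg x}"
proof -
  have "finite {f::'v cfg. \<forall>x. (x \<in> UNIV \<longrightarrow> f x \<in> {-1,1}) \<and> (x \<notin> UNIV \<longrightarrow> f x = 0)}"
    by (rule finite_set_of_finite_funs) auto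
  then show ?thesis by (simp add: is_cfg_def)
qed

lemma D_mono:
  assumes "supermodular u" "is_cfg x" "is_cfg y" "y \<le> x"
  shows "D u i y \<le> D u i x"
  using assms unfolding supermodular_def D_def le_fun_def by blast

lemma equilibria_iff:
  "x \<in> equilibria u \<longleftrightarrow> is_cfg x \<and> ustable0 u x \<and> dstable0 u x"
proof -
  have "x i \<in> best_resp u i x \<longleftrightarrow> (x i = -1 \<longrightarrow> D u i x \<le> 0) \<and> (x i = 1 \<longrightarrow> 0 \<le> D u i x)"
    if "is_cfg x" for i
  proof -
    have c: "x i = -1 \<or> x i = 1" using that by (rule cfg_cases)
    show ?thesis
    proof (cases "x i = -1")
      case True
      then have "x(i:=-1) = x" by auto
      then show ?thesis using True
        by (auto simp: best_resp_def D_def)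
    next
      case False
      then have T: "x i = 1" using c by auto
      then have "x(i:=1) = x" by auto
      then show ?thesis using T
        by (auto simp: best_resp_def D_def)
    qed
  qed
  then show ?thesis unfolding equilibria_def ustable0_def dstable0_def
    by (auto simp: is_cfg_def)
qed

lemma adm_up: "adm_step i x y \<Longrightarrow> x \<le> y \<Longrightarrow> x i = -1 \<and> y = x(i:=1)"
proof -
  assume a: "adm_step i x y" "x \<le> y"
  then have "x i \<in> {-1,1}" "y i \<in> {-1,1}" "y i \<noteq> x i" "x i \<le> y i"
    by (auto simp: adm_step_def is_cfg_def le_fun_def)
  then have "x i = -1" "y i = 1" by auto
  moreover have "y = x(i:=1)" using a(1) \<open>y i = 1\<close> by (auto simp: adm_step_def)
  ultimately show ?thesis by simp
qed


lemma bigjoin_mem_aux: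
  assumes "finite T" "T \<noteq> {}" "T \<subseteq> S" "\<And>a b. a \<in> S \<Longrightarrow> b \<in> S \<Longrightarrow> sup a b \<in> S"
  shows "bigjoin T \<in> S"
  using assms(1,2,3)
proof (induction T rule: finite_ne_induct)
  case (singleton x)
  then show ?case by (simp add: bigjoin_def)
next
  case (insert x F)
  have "bigjoin (insert x F) = sup x (bigjoin F)"
    using insert.hyps by (auto simp: bigjoin_def sup_fun_def image_insert Max_insert sup_int_def)
  moreover have "bigjoin F \<in> S" using insert.IH insert.prems by simp
  moreover have "x \<in> S" using insert.prems by simp
  ultimately show ?case using assms(4) by metis
qed

lemma bigjoin_mem:
  assumes "finite S" "S \<noteq> {}" "\<And>a b. a \<in> S \<Longrightarrow> b \<in> S \<Longrightarrow> sup a b \<in> S"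
  shows "bigjoin S \<in> S"
  by (rule bigjoin_mem_aux[OF assms(1,2) order.refl assms(3)])

lemma bigjoin_ge: "finite S \<Longrightarrow> y \<in> S \<Longrightarrow> y \<le> bigjoin S"
  by (auto simp: bigjoin_def le_fun_def)

lemma bigmeet_mem_aux:
  assumes "finite T" "T \<noteq> {}" "T \<subseteq> S" "\<And>a b. a \<in> S \<Longrightarrow> b \<in> S \<Longrightarrow> inf a b \<in> S"
  shows "bigmeet T \<in> S"
  using assms(1,2,3)
proof (induction T rule: finite_ne_induct)
  case (singleton x)
  then show ?case by (simp add: bigmeet_def)
next
  case (insert x F)
  have "bigmeet (insert x F) = inf x (bigmeet F)"
    using insert.hyps by (auto simp: bigmeet_def inf_fun_def image_insert Min_insert inf_int_def)
  moreover have "bigmeet F \<in> S" using insert.IH insert.prems by simp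
  moreover have "x \<in> S" using insert.prems by simp
  ultimately show ?case using assms(4) by metis
qed

lemma bigmeet_mem:
  assumes "finite S" "S \<noteq> {}" "\<And>a b. a \<in> S \<Longrightarrow> b \<in> S \<Longrightarrow> inf a b \<in> S"
  shows "bigmeet S \<in> S"
  by (rule bigmeet_mem_aux[OF assms(1,2) order.refl assms(3)])

lemma bigmeet_le: "finite S \<Longrightarrow> y \<in> S \<Longrightarrow> bigmeet S \<le> y"
  by (auto simp: bigmeet_def le_fun_def)

definition topP :: "'v game \<Rightarrow> (real \<Rightarrow> bool) \<Rightarrow> 'v cfg \<Rightarrow> 'v cfg" where
  "topP u P x = bigjoin {y. (ustep u P)\<^sup>*\<^sup>* x y}"
definition botP :: "'v game \<Rightarrow> (real \<Rightarrow> bool) \<Rightarrow> 'v cfg \<Rightarrow> 'v cfg" where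
  "botP u P x = bigmeet {y. (dstep u P)\<^sup>*\<^sup>* x y}"

lemma ustep_le: "ustep u P x y \<Longrightarrow> x \<le> y \<and> is_cfg y"
  by (auto simp: ustep_def le_fun_def)
lemma dstep_le: "dstep u P x y \<Longrightarrow> y \<le> x \<and> is_cfg y"
  by (auto simp: dstep_def le_fun_def)

lemma ureach_le: "(ustep u P)\<^sup>*\<^sup>* x y \<Longrightarrow> is_cfg x \<Longrightarrow> x \<le> y \<and> is_cfg y"
  by (induction rule: rtranclp_induct) (auto dest: ustep_le)
lemma dreach_le: "(dstep u P)\<^sup>*\<^sup>* x y \<Longrightarrow> is_cfg x \<Longrightarrow> y \<le> x \<and> is_cfg y"
  by (induction rule: rtranclp_induct) (auto dest: dstep_le)

definition upc :: "(real \<Rightarrow> bool) \<Rightarrow> bool" where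
  "upc P \<longleftrightarrow> (\<forall>a b. P a \<longrightarrow> a \<le> b \<longrightarrow> P b)"
definition dnc :: "(real \<Rightarrow> bool) \<Rightarrow> bool" where
  "dnc P \<longleftrightarrow> (\<forall>a b. P b \<longrightarrow> a \<le> b \<longrightarrow> P a)"

lemma ureach_lift:
  assumes sm: "supermodular u" and P: "upc P"
  assumes "(ustep u P)\<^sup>*\<^sup>* x y" "is_cfg x" "is_cfg z" "x \<le> z"
  shows "(ustep u P)\<^sup>*\<^sup>* z (sup z y)"
  using assms(3,4)
proof (induction rule: rtranclp_induct)
  case base
  then show ?case using assms(6) by (simp add: sup_absorb1)
next
  case (step w w')
  have IH: "(ustep u P)\<^sup>*\<^sup>* z (sup z w)" using step by blast
  have cw: "is_cfg w" "x \<le> w" using ureach_le[OF step.hyps(1) step.prems] by auto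
  obtain i where i: "w i = -1" "w' = w(i:=1)" "P (D u i w)" using step.hyps(2) by (auto simp: ustep_def)
  have cs: "is_cfg (sup z w)" using cfg_sup[OF assms(5) cw(1)] .
  have eq: "sup z w' = (sup z w)(i:=1)"
  proof (rule ext)
    fix j show "sup z w' j = ((sup z w)(i:=1)) j" using i cfg_cases[OF assms(5), of j] by (auto simp: sup_fun_def sup_int_def)
  qed
  show ?case
  proof (cases "sup z w i = 1")
    case True
    then have "sup z w' = sup z w" using eq by auto
    then show ?thesis using IH by (simp only:)
  next
    case False
    then have m1: "sup z w i = -1" using cfg_cases[OF cs, of i] by auto
    have "D u i w \<le> D u i (sup z w)" by (rule D_mono[OF sm cs cw(1)]) simp
    then have "P (D u i (sup z w))" using P i(3) by (auto simp: upc_def)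
    then have "ustep u P (sup z w) (sup z w')" using m1 eq cs by (auto simp: ustep_def)
    then show ?thesis using IH by (meson rtranclp.rtrancl_into_rtrancl)
  qed
qed

lemma dreach_lift:
  assumes sm: "supermodular u" and P: "dnc P"
  assumes "(dstep u P)\<^sup>*\<^sup>* x y" "is_cfg x" "is_cfg z" "z \<le> x"
  shows "(dstep u P)\<^sup>*\<^sup>* z (inf z y)"
  using assms(3,4)
proof (induction rule: rtranclp_induct)
  case base
  then show ?case using assms(6) by (simp add: inf_absorb1)
next
  case (step w w')
  have IH: "(dstep u P)\<^sup>*\<^sup>* z (inf z w)" using step by blast
  have cw: "is_cfg w" "w \<le> x" using dreach_le[OF step.hyps(1) step.prems] by auto
  obtain i where i: "w i = 1" "w' = w(i:=-1)" "P (D u i w)" using step.hyps(2) by (auto simp: dstep_def)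
  have cs: "is_cfg (inf z w)" using cfg_inf[OF assms(5) cw(1)] .
  have eq: "inf z w' = (inf z w)(i:=-1)"
  proof (rule ext)
    fix j show "inf z w' j = ((inf z w)(i:=-1)) j" using i cfg_cases[OF assms(5), of j] by (auto simp: inf_fun_def inf_int_def)
  qed
  show ?case
  proof (cases "inf z w i = -1")
    case True
    then have "inf z w' = inf z w" using eq by auto
    then show ?thesis using IH by (simp only:)
  next
    case False
    then have m1: "inf z w i = 1" using cfg_cases[OF cs, of i] by auto
    have "D u i (inf z w) \<le> D u i w" by (rule D_mono[OF sm cw(1) cs]) simp
    then have "P (D u i (inf z w))" using P i(3) by (auto simp: dnc_def)
    then have "dstep u P (inf z w) (inf z w')" using m1 eq cs by (auto simp: dstep_def)
    then show ?thesis using IH by (meson rtranclp.rtrancl_into_rtrancl)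
  qed
qed


context
  fixes u :: "('v::finite) game" and P :: "real \<Rightarrow> bool"
  assumes sm: "supermodular u" and P: "upc P"
begin

lemma top_props:
  assumes x: "is_cfg x"
  shows "(ustep u P)\<^sup>*\<^sup>* x (topP u P x)" "\<And>y. (ustep u P)\<^sup>*\<^sup>* x y \<Longrightarrow> y \<le> topP u P x"
proof -
  let ?S = "{y. (ustep u P)\<^sup>*\<^sup>* x y}"
  have fin: "finite ?S"
    by (rule finite_subset[OF _ finite_cfgs]) (auto dest: ureach_le[OF _ x])
  have "topP u P x \<in> ?S" unfolding topP_def
  proof (rule bigjoin_mem[OF fin])
    show "?S \<noteq> {}" by auto
    fix a b assume a: "a \<in> ?S" and b: "b \<in> ?S"
    have a': "(ustep u P)\<^sup>*\<^sup>* x a" and b': "(ustep u P)\<^sup>*\<^sup>* x b" using a b by simp_all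
    have ca: "is_cfg a" "x \<le> a" using ureach_le[OF a' x] by auto
    have "(ustep u P)\<^sup>*\<^sup>* a (sup a b)" by (rule ureach_lift[OF sm P b' x ca(1) ca(2)])
    then have "(ustep u P)\<^sup>*\<^sup>* x (sup a b)" by (rule rtranclp_trans[OF a'])
    then show "sup a b \<in> ?S" by simp
  qed
  then show "(ustep u P)\<^sup>*\<^sup>* x (topP u P x)" by simp
  show "\<And>y. (ustep u P)\<^sup>*\<^sup>* x y \<Longrightarrow> y \<le> topP u P x"
    unfolding topP_def using bigjoin_ge[OF fin] by auto
qed

lemma top_cfg: "is_cfg x \<Longrightarrow> is_cfg (topP u P x) \<and> x \<le> topP u P x"
  using ureach_le[OF top_props(1)] by simp

lemma top_stable: "is_cfg x \<Longrightarrow> topP u P x i = -1 \<Longrightarrow> \<not> P (D u i (topP u P x))"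
proof
  assume x: "is_cfg x" and m: "topP u P x i = -1" and p: "P (D u i (topP u P x))"
  have "ustep u P (topP u P x) ((topP u P x)(i:=1))"
    using m p top_cfg[OF x] by (auto simp: ustep_def)
  then have "(ustep u P)\<^sup>*\<^sup>* x ((topP u P x)(i:=1))"
    by (rule rtranclp.rtrancl_into_rtrancl[OF top_props(1)[OF x]])
  then have "(topP u P x)(i:=1) \<le> topP u P x" by (rule top_props(2)[OF x])
  then have "((topP u P x)(i:=1)) i \<le> topP u P x i" by (rule le_funD)
  then show False using m by simp
qed

lemma ureach_below:
  assumes "(ustep u P)\<^sup>*\<^sup>* x y" "x \<le> z" "is_cfg z" "\<forall>i. z i = -1 \<longrightarrow> \<not> P (D u i z)"
  shows "y \<le> z"
  using assms(1)
proof (induction rule: rtranclp_induct)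
  case base then show ?case using assms(2) .
next
  case (step w w')
  obtain i where i: "is_cfg w" "w i = -1" "w' = w(i:=1)" "P (D u i w)" using step.hyps(2) by (auto simp: ustep_def)
  have "D u i w \<le> D u i z" using D_mono[OF sm assms(3) i(1) step.IH] .
  then have "z i \<noteq> -1" using assms(4) i(4) P by (auto simp: upc_def)
  then have "z i = 1" using cfg_cases[OF assms(3)] by auto
  then show ?case using step.IH i(3) by (auto simp: le_fun_def)
qed

lemma top_below: "is_cfg x \<Longrightarrow> x \<le> z \<Longrightarrow> is_cfg z \<Longrightarrow> \<forall>i. z i = -1 \<longrightarrow> \<not> P (D u i z) \<Longrightarrow> topP u P x \<le> z"
  by (rule ureach_below[OF top_props(1)])

lemma top_fix: assumes "is_cfg x" "\<forall>i. x i = -1 \<longrightarrow> \<not> P (D u i x)" shows "topP u P x = x"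
proof (rule order.antisym)
  show "topP u P x \<le> x" using top_below[OF assms(1) order.refl assms] .
  show "x \<le> topP u P x" using top_cfg[OF assms(1)] by simp
qed

lemma ureach_dstable0:
  assumes "(ustep u P)\<^sup>*\<^sup>* x y" "\<forall>d. P d \<longrightarrow> 0 \<le> d" "is_cfg x" "dstable0 u x"
  shows "dstable0 u y"
  using assms(1)
proof (induction rule: rtranclp_induct)
  case base then show ?case using assms(4) .
next
  case (step w w')
  obtain i where i: "is_cfg w" "w i = -1" "w' = w(i:=1)" "P (D u i w)" using step.hyps(2) by (auto simp: ustep_def)
  show ?case unfolding dstable0_def
  proof (intro allI impI)
    fix j assume j: "w' j = 1"
    show "0 \<le> D u j w'"
    proof (cases "j = i")
      case True then show ?thesis using i assms(2) by simp
    next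
      case False
      then have "w j = 1" using j i by simp
      then have "0 \<le> D u j w" using step.IH by (auto simp: dstable0_def)
      also have "D u j w \<le> D u j w'" using D_mono[OF sm, of w' w j] i by (auto simp: le_fun_def)
      finally show ?thesis .
    qed
  qed
qed

lemma top_dstable0: "is_cfg x \<Longrightarrow> \<forall>d. P d \<longrightarrow> 0 \<le> d \<Longrightarrow> dstable0 u x \<Longrightarrow> dstable0 u (topP u P x)"
  by (rule ureach_dstable0[OF top_props(1)])

lemma top_mono: "is_cfg x \<Longrightarrow> is_cfg y \<Longrightarrow> x \<le> y \<Longrightarrow> topP u P x \<le> topP u P y"
proof -
  assume x: "is_cfg x" and y: "is_cfg y" and le: "x \<le> y"
  have "(ustep u P)\<^sup>*\<^sup>* y (sup y (topP u P x))"
    using ureach_lift[OF sm P top_props(1)[OF x] x y le] .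
  then have "sup y (topP u P x) \<le> topP u P y" using top_props(2)[OF y] by blast
  then show ?thesis by simp
qed

lemma top_step: "ustep u P x y \<Longrightarrow> topP u P y \<le> topP u P x"
proof -
  assume s: "ustep u P x y"
  have x: "is_cfg x" using s by (simp add: ustep_def)
  have y: "is_cfg y" using ustep_le[OF s] by simp
  have "(ustep u P)\<^sup>*\<^sup>* x (topP u P y)"
    by (rule converse_rtranclp_into_rtranclp[OF s top_props(1)[OF y]])
  then show ?thesis by (rule top_props(2)[OF x])
qed

end


context
  fixes u :: "('v::finite) game" and Q :: "real \<Rightarrow> bool"
  assumes sm: "supermodular u" and Q: "dnc Q"
begin

lemma bot_props:
  assumes x: "is_cfg x"
  shows "(dstep u Q)\<^sup>*\<^sup>* x (botP u Q x)" "\<And>y. (dstep u Q)\<^sup>*\<^sup>* x y \<Longrightarrow> botP u Q x \<le> y"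
proof -
  let ?S = "{y. (dstep u Q)\<^sup>*\<^sup>* x y}"
  have fin: "finite ?S"
    by (rule finite_subset[OF _ finite_cfgs]) (auto dest: dreach_le[OF _ x])
  have "botP u Q x \<in> ?S" unfolding botP_def
  proof (rule bigmeet_mem[OF fin])
    show "?S \<noteq> {}" by auto
    fix a b assume a: "a \<in> ?S" and b: "b \<in> ?S"
    have a': "(dstep u Q)\<^sup>*\<^sup>* x a" and b': "(dstep u Q)\<^sup>*\<^sup>* x b" using a b by simp_all
    have ca: "is_cfg a" "a \<le> x" using dreach_le[OF a' x] by auto
    have "(dstep u Q)\<^sup>*\<^sup>* a (inf a b)" by (rule dreach_lift[OF sm Q b' x ca(1) ca(2)])
    then have "(dstep u Q)\<^sup>*\<^sup>* x (inf a b)" by (rule rtranclp_trans[OF a'])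
    then show "inf a b \<in> ?S" by simp
  qed
  then show "(dstep u Q)\<^sup>*\<^sup>* x (botP u Q x)" by simp
  show "\<And>y. (dstep u Q)\<^sup>*\<^sup>* x y \<Longrightarrow> botP u Q x \<le> y"
    unfolding botP_def using bigmeet_le[OF fin] by auto
qed

lemma bot_cfg: "is_cfg x \<Longrightarrow> is_cfg (botP u Q x) \<and> botP u Q x \<le> x"
  using dreach_le[OF bot_props(1)] by simp

lemma bot_stable: "is_cfg x \<Longrightarrow> botP u Q x i = 1 \<Longrightarrow> \<not> Q (D u i (botP u Q x))"
proof
  assume x: "is_cfg x" and m: "botP u Q x i = 1" and p: "Q (D u i (botP u Q x))"
  have "dstep u Q (botP u Q x) ((botP u Q x)(i:=-1))"
    using m p bot_cfg[OF x] by (auto simp: dstep_def)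
  then have "(dstep u Q)\<^sup>*\<^sup>* x ((botP u Q x)(i:=-1))"
    by (rule rtranclp.rtrancl_into_rtrancl[OF bot_props(1)[OF x]])
  then have "botP u Q x \<le> (botP u Q x)(i:=-1)" by (rule bot_props(2)[OF x])
  then have "botP u Q x i \<le> ((botP u Q x)(i:=-1)) i" by (rule le_funD)
  then show False using m by simp
qed

lemma dreach_above:
  assumes "(dstep u Q)\<^sup>*\<^sup>* x y" "z \<le> x" "is_cfg z" "\<forall>i. z i = 1 \<longrightarrow> \<not> Q (D u i z)"
  shows "z \<le> y"
  using assms(1)
proof (induction rule: rtranclp_induct)
  case base then show ?case using assms(2) .
next
  case (step w w')
  obtain i where i: "is_cfg w" "w i = 1" "w' = w(i:=-1)" "Q (D u i w)" using step.hyps(2) by (auto simp: dstep_def)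
  have "D u i z \<le> D u i w" using D_mono[OF sm i(1) assms(3) step.IH] .
  then have "Q (D u i z)" using i(4) Q unfolding dnc_def by blast
  then have "z i \<noteq> 1" using assms(4) by blast
  then have "z i = -1" using cfg_cases[OF assms(3)] by auto
  then show ?case using step.IH i(3) by (auto simp: le_fun_def)
qed

lemma bot_above: "is_cfg x \<Longrightarrow> z \<le> x \<Longrightarrow> is_cfg z \<Longrightarrow> \<forall>i. z i = 1 \<longrightarrow> \<not> Q (D u i z) \<Longrightarrow> z \<le> botP u Q x"
  by (rule dreach_above[OF bot_props(1)])

lemma bot_fix: assumes "is_cfg x" "\<forall>i. x i = 1 \<longrightarrow> \<not> Q (D u i x)" shows "botP u Q x = x"
proof (rule order.antisym)
  show "x \<le> botP u Q x" using bot_above[OF assms(1) order.refl assms] .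
  show "botP u Q x \<le> x" using bot_cfg[OF assms(1)] by simp
qed

lemma dreach_ustable0:
  assumes "(dstep u Q)\<^sup>*\<^sup>* x y" "\<forall>d. Q d \<longrightarrow> d \<le> 0" "is_cfg x" "ustable0 u x"
  shows "ustable0 u y"
  using assms(1)
proof (induction rule: rtranclp_induct)
  case base then show ?case using assms(4) .
next
  case (step w w')
  obtain i where i: "is_cfg w" "w i = 1" "w' = w(i:=-1)" "Q (D u i w)" using step.hyps(2) by (auto simp: dstep_def)
  show ?case unfolding ustable0_def
  proof (intro allI impI)
    fix j assume j: "w' j = -1"
    show "D u j w' \<le> 0"
    proof (cases "j = i")
      case True then show ?thesis using i assms(2) by simp
    next
      case False
      then have "w j = -1" using j i by simp
      have "D u j w' \<le> D u j w" using D_mono[OF sm, of w w' j] i by (auto simp: le_fun_def)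
      also have "D u j w \<le> 0" using step.IH \<open>w j = -1\<close> by (auto simp: ustable0_def)
      finally show ?thesis .
    qed
  qed
qed

lemma bot_ustable0: "is_cfg x \<Longrightarrow> \<forall>d. Q d \<longrightarrow> d \<le> 0 \<Longrightarrow> ustable0 u x \<Longrightarrow> ustable0 u (botP u Q x)"
  by (rule dreach_ustable0[OF bot_props(1)])

lemma bot_mono: "is_cfg x \<Longrightarrow> is_cfg y \<Longrightarrow> x \<le> y \<Longrightarrow> botP u Q x \<le> botP u Q y"
proof -
  assume x: "is_cfg x" and y: "is_cfg y" and le: "x \<le> y"
  have "(dstep u Q)\<^sup>*\<^sup>* x (inf x (botP u Q y))"
    using dreach_lift[OF sm Q bot_props(1)[OF y] y x le] .
  then have "botP u Q x \<le> inf x (botP u Q y)" by (rule bot_props(2)[OF x])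
  then show ?thesis by simp
qed

lemma bot_step: "dstep u Q x y \<Longrightarrow> botP u Q x \<le> botP u Q y"
proof -
  assume s: "dstep u Q x y"
  have x: "is_cfg x" using s by (simp add: dstep_def)
  have y: "is_cfg y" using dstep_le[OF s] by simp
  have "(dstep u Q)\<^sup>*\<^sup>* x (botP u Q y)"
    by (rule converse_rtranclp_into_rtranclp[OF s bot_props(1)[OF y]])
  then show ?thesis by (rule bot_props(2)[OF x])
qed

end


lemma adm_char: "adm_step i x y \<longleftrightarrow> is_cfg x \<and> ((x i = -1 \<and> y = x(i:=1)) \<or> (x i = 1 \<and> y = x(i:=-1)))"
proof
  assume a: "adm_step i x y"
  then have c: "is_cfg x" "is_cfg y" "y i \<noteq> x i" "\<forall>j. j \<noteq> i \<longrightarrow> y j = x j" by (auto simp: adm_step_def)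
  have y: "y = x(i := y i)" using c(4) by (auto intro!: ext)
  have "x i = -1 \<or> x i = 1" "y i = -1 \<or> y i = 1" using c(1,2) by (auto dest: cfg_cases)
  then show "is_cfg x \<and> ((x i = -1 \<and> y = x(i:=1)) \<or> (x i = 1 \<and> y = x(i:=-1)))"
    using c(1,3) y by auto
next
  assume "is_cfg x \<and> ((x i = -1 \<and> y = x(i:=1)) \<or> (x i = 1 \<and> y = x(i:=-1)))"
  then show "adm_step i x y" by (auto simp: adm_step_def)
qed

lemma D_up: "x i = -1 \<Longrightarrow> D u i x = u i (x(i:=1)) - u i x"
  unfolding D_def by (metis fun_upd_triv)
lemma D_dn: "x i = 1 \<Longrightarrow> D u i x = u i x - u i (x(i:=-1))"
  unfolding D_def by (metis fun_upd_triv)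

lemma lt_up: "(x::'v cfg) i = -1 \<Longrightarrow> x < x(i:=1)"
  by (auto simp: less_fun_def le_fun_def)
lemma lt_dn: "(x::'v cfg) i = 1 \<Longrightarrow> x(i:=-1) < x"
  by (auto simp: less_fun_def le_fun_def)
lemma nlt_up: "(x::'v cfg) i = -1 \<Longrightarrow> \<not> x(i:=1) < x"
  by (auto simp: less_fun_def le_fun_def)
lemma nlt_dn: "(x::'v cfg) i = 1 \<Longrightarrow> \<not> x < x(i:=-1)"
  by (auto simp: less_fun_def le_fun_def)

lemma I_step_char: "I_step u x y \<longleftrightarrow> ustep u (\<lambda>d. 0 < d) x y \<or> dstep u (\<lambda>d. d < 0) x y"
  unfolding I_step_def adm_char ustep_def dstep_def
  by (auto simp: D_up D_dn)

lemma BR_step_char: "BR_step u x y \<longleftrightarrow> ustep u (\<lambda>d. 0 \<le> d) x y \<or> dstep u (\<lambda>d. d \<le> 0) x y"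
  unfolding BR_step_def adm_char ustep_def dstep_def
  by (auto simp: D_up D_dn)

lemma Iu_char: "(\<lambda>x y. I_step u x y \<and> x < y) = ustep u (\<lambda>d. 0 < d)"
  unfolding I_step_char
  by (auto intro!: ext simp: ustep_def dstep_def lt_up nlt_dn)
lemma Id_char: "(\<lambda>x y. I_step u x y \<and> y < x) = dstep u (\<lambda>d. d < 0)"
  unfolding I_step_char
  by (auto intro!: ext simp: ustep_def dstep_def lt_dn nlt_up)
lemma Bu_char: "(\<lambda>x y. BR_step u x y \<and> x < y) = ustep u (\<lambda>d. 0 \<le> d)"
  unfolding BR_step_char
  by (auto intro!: ext simp: ustep_def dstep_def lt_up nlt_dn)
lemma Bd_char: "(\<lambda>x y. BR_step u x y \<and> y < x) = dstep u (\<lambda>d. d \<le> 0)"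
  unfolding BR_step_char
  by (auto intro!: ext simp: ustep_def dstep_def lt_dn nlt_up)

lemma f_plus_eq: "f_plus u = topP u (\<lambda>d. 0 < d)"
  unfolding f_plus_def topP_def I_reach_mono_def Iu_char ..
lemma g_plus_eq: "g_plus u = topP u (\<lambda>d. 0 \<le> d)"
  unfolding g_plus_def topP_def BR_reach_mono_def Bu_char ..
lemma f_minus_eq: "f_minus u = botP u (\<lambda>d. d < 0)"
  unfolding f_minus_def botP_def I_reach_anti_def Id_char ..
lemma g_minus_eq: "g_minus u = botP u (\<lambda>d. d \<le> 0)"
  unfolding g_minus_def botP_def BR_reach_anti_def Bd_char ..

lemma upc1: "upc (\<lambda>d::real. 0 < d)" by (auto simp: upc_def)
lemma upc2: "upc (\<lambda>d::real. 0 \<le> d)" by (auto simp: upc_def)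
lemma dnc1: "dnc (\<lambda>d::real. d < 0)" by (auto simp: dnc_def)
lemma dnc2: "dnc (\<lambda>d::real. d \<le> 0)" by (auto simp: dnc_def)


lemma m1_cfg: "is_cfg (\<lambda>_. -1)" by (simp add: is_cfg_def)
lemma p1_cfg: "is_cfg (\<lambda>_. 1)" by (simp add: is_cfg_def)

lemma Iu_reach: "(ustep u (\<lambda>d. 0 < d))\<^sup>*\<^sup>* x y \<Longrightarrow> I_reach u x y"
  unfolding I_reach_def by (rule mono_rtranclp[rule_format]) (auto simp: I_step_char)
lemma Id_reach: "(dstep u (\<lambda>d. d < 0))\<^sup>*\<^sup>* x y \<Longrightarrow> I_reach u x y"
  unfolding I_reach_def by (rule mono_rtranclp[rule_format]) (auto simp: I_step_char)
lemma Bu_reach: "(ustep u (\<lambda>d. 0 \<le> d))\<^sup>*\<^sup>* x y \<Longrightarrow> BR_reach u x y"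
  unfolding BR_reach_def by (rule mono_rtranclp[rule_format]) (auto simp: BR_step_char)
lemma Bd_reach: "(dstep u (\<lambda>d. d \<le> 0))\<^sup>*\<^sup>* x y \<Longrightarrow> BR_reach u x y"
  unfolding BR_reach_def by (rule mono_rtranclp[rule_format]) (auto simp: BR_step_char)
lemma Iu_BR: "(ustep u (\<lambda>d. 0 < d))\<^sup>*\<^sup>* x y \<Longrightarrow> BR_reach u x y"
  unfolding BR_reach_def by (rule mono_rtranclp[rule_format]) (auto simp: BR_step_char ustep_def)
lemma Id_BR: "(dstep u (\<lambda>d. d < 0))\<^sup>*\<^sup>* x y \<Longrightarrow> BR_reach u x y"
  unfolding BR_reach_def by (rule mono_rtranclp[rule_format]) (auto simp: BR_step_char dstep_def)
lemma I_BR: "I_reach u x y \<Longrightarrow> BR_reach u x y"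
  unfolding BR_reach_def I_reach_def by (rule mono_rtranclp[rule_format])
    (auto simp: BR_step_char I_step_char ustep_def dstep_def)

lemma step_cfg: "I_step u x y \<Longrightarrow> is_cfg x \<and> is_cfg y"
  by (auto simp: I_step_def adm_step_def)
lemma BRstep_cfg: "BR_step u x y \<Longrightarrow> is_cfg x \<and> is_cfg y"
  by (auto simp: BR_step_def adm_step_def)

context
  fixes u :: "('v::finite) game"
  assumes sm: "supermodular u"
begin

abbreviation "FP \<equiv> topP u (\<lambda>d. 0 < d)"
abbreviation "GP \<equiv> topP u (\<lambda>d. 0 \<le> d)"
abbreviation "FM \<equiv> botP u (\<lambda>d. d < 0)"
abbreviation "GM \<equiv> botP u (\<lambda>d. d \<le> 0)"

lemmas tpI = top_props[OF sm upc1] top_cfg[OF sm upc1] top_stable[OF sm upc1] top_below[OF sm upc1]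
  top_fix[OF sm upc1] top_dstable0[OF sm upc1] top_mono[OF sm upc1] top_step[OF sm upc1]
lemmas tpB = top_props[OF sm upc2] top_cfg[OF sm upc2] top_stable[OF sm upc2] top_below[OF sm upc2]
  top_fix[OF sm upc2] top_dstable0[OF sm upc2] top_mono[OF sm upc2] top_step[OF sm upc2]
lemmas btI = bot_props[OF sm dnc1] bot_cfg[OF sm dnc1] bot_stable[OF sm dnc1] bot_above[OF sm dnc1]
  bot_fix[OF sm dnc1] bot_ustable0[OF sm dnc1] bot_mono[OF sm dnc1] bot_step[OF sm dnc1]
lemmas btB = bot_props[OF sm dnc2] bot_cfg[OF sm dnc2] bot_stable[OF sm dnc2] bot_above[OF sm dnc2]
  bot_fix[OF sm dnc2] bot_ustable0[OF sm dnc2] bot_mono[OF sm dnc2] bot_step[OF sm dnc2]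

lemma FP_ustable0: "is_cfg x \<Longrightarrow> ustable0 u (FP x)"
  using tpI(4) by (fastforce simp: ustable0_def not_less)
lemma GP_ustable0: "is_cfg x \<Longrightarrow> ustable0 u (GP x)"
  using tpB(4) by (fastforce simp: ustable0_def not_le)
lemma FM_dstable0: "is_cfg x \<Longrightarrow> dstable0 u (FM x)"
  using btI(4) by (fastforce simp: dstable0_def not_less)
lemma GM_dstable0: "is_cfg x \<Longrightarrow> dstable0 u (GM x)"
  using btB(4) by (fastforce simp: dstable0_def not_le)

lemma eq_FM: "is_cfg x \<Longrightarrow> ustable0 u x \<Longrightarrow> FM x \<in> equilibria u"
  unfolding equilibria_iff using btI(3) FM_dstable0 btI(7)[of x] by auto
lemma eq_FP: "is_cfg x \<Longrightarrow> dstable0 u x \<Longrightarrow> FP x \<in> equilibria u"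
  unfolding equilibria_iff using tpI(3) FP_ustable0 tpI(7)[of x] by auto

lemma FP_fix: "x \<in> equilibria u \<Longrightarrow> FP x = x"
  by (rule tpI(6)) (auto simp: equilibria_iff ustable0_def not_less)
lemma FM_fix: "x \<in> equilibria u \<Longrightarrow> FM x = x"
  by (rule btI(6)) (auto simp: equilibria_iff dstable0_def not_less)

lemma GP_eq: "x \<in> equilibria u \<Longrightarrow> GP x \<in> equilibria u"
  unfolding equilibria_iff using tpB(3) GP_ustable0 tpB(7)[of x] by auto
lemma GM_eq: "x \<in> equilibria u \<Longrightarrow> GM x \<in> equilibria u"
  unfolding equilibria_iff using btB(3) GM_dstable0 btB(7)[of x] by auto


lemma eq_no_Istep: "x \<in> equilibria u \<Longrightarrow> \<not> I_step u x y"
  by (auto simp: I_step_char ustep_def dstep_def equilibria_iff ustable0_def dstable0_def)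

lemma eq_I_reach: "I_reach u x z \<Longrightarrow> x \<in> equilibria u \<Longrightarrow> z = x"
  unfolding I_reach_def by (induction rule: rtranclp_induct) (auto dest: eq_no_Istep)

lemma I_great: "I_reach u x z \<Longrightarrow> is_cfg x \<Longrightarrow> FM (FP z) \<le> FM (FP x)"
  unfolding I_reach_def
proof (induction rule: rtranclp_induct)
  case base then show ?case by simp
next
  case (step y z)
  have cy: "is_cfg y" "is_cfg z" using step_cfg[OF step.hyps(2)] by auto
  have "FM (FP z) \<le> FM (FP y)"
  proof (cases "ustep u (\<lambda>d. 0 < d) y z")
    case True
    then show ?thesis using tpI(9)[OF True] tpI(3)[OF cy(1)] tpI(3)[OF cy(2)] btI(8) by blast
  next
    case False
    then have d: "dstep u (\<lambda>d. d < 0) y z" using step.hyps(2) by (simp add: I_step_char)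
    then have "z \<le> y" using dstep_le by blast
    then have "FP z \<le> FP y" using tpI(8)[OF cy(2) cy(1)] by blast
    then show ?thesis using tpI(3)[OF cy(1)] tpI(3)[OF cy(2)] btI(8) by blast
  qed
  then show ?case using step.IH step.prems by (blast intro: order_trans)
qed

lemma I_least: "I_reach u x z \<Longrightarrow> is_cfg x \<Longrightarrow> FP (FM x) \<le> FP (FM z)"
  unfolding I_reach_def
proof (induction rule: rtranclp_induct)
  case base then show ?case by simp
next
  case (step y z)
  have cy: "is_cfg y" "is_cfg z" using step_cfg[OF step.hyps(2)] by auto
  have "FP (FM y) \<le> FP (FM z)"
  proof (cases "dstep u (\<lambda>d. d < 0) y z")
    case True
    then show ?thesis using btI(9)[OF True] btI(3)[OF cy(1)] btI(3)[OF cy(2)] tpI(8) by blast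
  next
    case False
    then have d: "ustep u (\<lambda>d. 0 < d) y z" using step.hyps(2) by (simp add: I_step_char)
    then have "y \<le> z" using ustep_le by blast
    then have "FM y \<le> FM z" using btI(8)[OF cy(1) cy(2)] by blast
    then show ?thesis using btI(3)[OF cy(1)] btI(3)[OF cy(2)] tpI(8) by blast
  qed
  then show ?case using step.IH step.prems by (blast intro: order_trans)
qed

lemma BR_great: "BR_reach u x z \<Longrightarrow> is_cfg x \<Longrightarrow> FM (GP z) \<le> FM (GP x)"
  unfolding BR_reach_def
proof (induction rule: rtranclp_induct)
  case base then show ?case by simp
next
  case (step y z)
  have cy: "is_cfg y" "is_cfg z" using BRstep_cfg[OF step.hyps(2)] by auto
  have "FM (GP z) \<le> FM (GP y)"
  proof (cases "ustep u (\<lambda>d. 0 \<le> d) y z")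
    case True
    then show ?thesis using tpB(9)[OF True] tpB(3)[OF cy(1)] tpB(3)[OF cy(2)] btI(8) by blast
  next
    case False
    then have d: "dstep u (\<lambda>d. d \<le> 0) y z" using step.hyps(2) by (simp add: BR_step_char)
    then have "z \<le> y" using dstep_le by blast
    then have "GP z \<le> GP y" using tpB(8)[OF cy(2) cy(1)] by blast
    then show ?thesis using tpB(3)[OF cy(1)] tpB(3)[OF cy(2)] btI(8) by blast
  qed
  then show ?case using step.IH step.prems by (blast intro: order_trans)
qed

lemma BR_least: "BR_reach u x z \<Longrightarrow> is_cfg x \<Longrightarrow> FP (GM x) \<le> FP (GM z)"
  unfolding BR_reach_def
proof (induction rule: rtranclp_induct)
  case base then show ?case by simp
next
  case (step y z)
  have cy: "is_cfg y" "is_cfg z" using BRstep_cfg[OF step.hyps(2)] by auto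
  have "FP (GM y) \<le> FP (GM z)"
  proof (cases "dstep u (\<lambda>d. d \<le> 0) y z")
    case True
    then show ?thesis using btB(9)[OF True] btB(3)[OF cy(1)] btB(3)[OF cy(2)] tpI(8) by blast
  next
    case False
    then have d: "ustep u (\<lambda>d. 0 \<le> d) y z" using step.hyps(2) by (simp add: BR_step_char)
    then have "y \<le> z" using ustep_le by blast
    then have "GM y \<le> GM z" using btB(8)[OF cy(1) cy(2)] by blast
    then show ?thesis using btB(3)[OF cy(1)] btB(3)[OF cy(2)] tpI(8) by blast
  qed
  then show ?case using step.IH step.prems by (blast intro: order_trans)
qed


lemma I_reach_trans: "I_reach u x y \<Longrightarrow> I_reach u y z \<Longrightarrow> I_reach u x z"
  unfolding I_reach_def by (rule rtranclp_trans)
lemma BR_reach_trans: "BR_reach u x y \<Longrightarrow> BR_reach u y z \<Longrightarrow> BR_reach u x z"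
  unfolding BR_reach_def by (rule rtranclp_trans)

lemma part_i1: "is_cfg x \<Longrightarrow> is_greatest {z \<in> equilibria u. I_reach u x z} (FM (FP x))"
proof -
  assume x: "is_cfg x"
  have cp: "is_cfg (FP x)" using tpI(3)[OF x] by simp
  have e: "FM (FP x) \<in> equilibria u" by (rule eq_FM[OF cp FP_ustable0[OF x]])
  have r: "I_reach u x (FM (FP x))"
    by (rule I_reach_trans[OF Iu_reach[OF tpI(1)[OF x]] Id_reach[OF btI(1)[OF cp]]])
  have "w \<le> FM (FP x)" if "w \<in> equilibria u" "I_reach u x w" for w
    using I_great[OF that(2) x] FP_fix[OF that(1)] FM_fix[OF that(1)] by simp
  then show ?thesis using e r by (auto simp: is_greatest_def)
qed

lemma part_i2: "is_cfg x \<Longrightarrow> is_least {z \<in> equilibria u. I_reach u x z} (FP (FM x))"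
proof -
  assume x: "is_cfg x"
  have cp: "is_cfg (FM x)" using btI(3)[OF x] by simp
  have e: "FP (FM x) \<in> equilibria u" by (rule eq_FP[OF cp FM_dstable0[OF x]])
  have r: "I_reach u x (FP (FM x))"
    by (rule I_reach_trans[OF Id_reach[OF btI(1)[OF x]] Iu_reach[OF tpI(1)[OF cp]]])
  have "FP (FM x) \<le> w" if "w \<in> equilibria u" "I_reach u x w" for w
    using I_least[OF that(2) x] FP_fix[OF that(1)] FM_fix[OF that(1)] by simp
  then show ?thesis using e r by (auto simp: is_least_def)
qed

lemma part_ii1: "is_cfg x \<Longrightarrow> is_greatest {z \<in> equilibria u. BR_reach u x z} (FM (GP x))"
proof -
  assume x: "is_cfg x"
  have cp: "is_cfg (GP x)" using tpB(3)[OF x] by simp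
  have e: "FM (GP x) \<in> equilibria u" by (rule eq_FM[OF cp GP_ustable0[OF x]])
  have r: "BR_reach u x (FM (GP x))"
    by (rule BR_reach_trans[OF Bu_reach[OF tpB(1)[OF x]] Id_BR[OF btI(1)[OF cp]]])
  have "w \<le> FM (GP x)" if "w \<in> equilibria u" "BR_reach u x w" for w
  proof -
    have cw: "is_cfg w" using that(1) by (simp add: equilibria_iff)
    have "w = FM w" using FM_fix[OF that(1)] by simp
    also have "\<dots> \<le> FM (GP w)" using btI(8)[OF cw tpB(3)[OF cw, THEN conjunct1]] tpB(3)[OF cw] by simp
    also have "\<dots> \<le> FM (GP x)" by (rule BR_great[OF that(2) x])
    finally show ?thesis .
  qed
  then show ?thesis using e r by (auto simp: is_greatest_def)
qed

lemma part_ii2: "is_cfg x \<Longrightarrow> is_least {z \<in> equilibria u. BR_reach u x z} (FP (GM x))"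
proof -
  assume x: "is_cfg x"
  have cp: "is_cfg (GM x)" using btB(3)[OF x] by simp
  have e: "FP (GM x) \<in> equilibria u" by (rule eq_FP[OF cp GM_dstable0[OF x]])
  have r: "BR_reach u x (FP (GM x))"
    by (rule BR_reach_trans[OF Bd_reach[OF btB(1)[OF x]] Iu_BR[OF tpI(1)[OF cp]]])
  have "FP (GM x) \<le> w" if "w \<in> equilibria u" "BR_reach u x w" for w
  proof -
    have cw: "is_cfg w" using that(1) by (simp add: equilibria_iff)
    have "FP (GM x) \<le> FP (GM w)" by (rule BR_least[OF that(2) x])
    also have "\<dots> \<le> FP w" using tpI(8)[OF btB(3)[OF cw, THEN conjunct1] cw] btB(3)[OF cw] by simp
    also have "\<dots> = w" using FP_fix[OF that(1)] by simp
    finally show ?thesis .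
  qed
  then show ?thesis using e r by (auto simp: is_least_def)
qed

lemma part_iii1: "x \<in> equilibria u \<Longrightarrow> is_greatest {z \<in> equilibria u. BR_reach u x z} (GP x)"
proof -
  assume xe: "x \<in> equilibria u"
  then have x: "is_cfg x" by (simp add: equilibria_iff)
  have e: "GP x \<in> equilibria u" by (rule GP_eq[OF xe])
  have "FM (GP x) = GP x" by (rule FM_fix[OF e])
  then show ?thesis using part_ii1[OF x] Bu_reach[OF tpB(1)[OF x]] e by (auto simp: is_greatest_def)
qed

lemma part_iii2: "x \<in> equilibria u \<Longrightarrow> is_least {z \<in> equilibria u. BR_reach u x z} (GM x)"
proof -
  assume xe: "x \<in> equilibria u"
  then have x: "is_cfg x" by (simp add: equilibria_iff)
  have e: "GM x \<in> equilibria u" by (rule GM_eq[OF xe])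
  have "FP (GM x) = GM x" by (rule FP_fix[OF e])
  then show ?thesis using part_ii2[OF x] Bd_reach[OF btB(1)[OF x]] e by (auto simp: is_least_def)
qed


lemma lub: "is_cfg b \<Longrightarrow> dstable0 u b \<Longrightarrow>
   FP b \<in> equilibria u \<and> b \<le> FP b \<and> (\<forall>t\<in>equilibria u. b \<le> t \<longrightarrow> FP b \<le> t)"
proof -
  assume b: "is_cfg b" "dstable0 u b"
  have "FP b \<le> t" if "t \<in> equilibria u" "b \<le> t" for t
    using that by (intro tpI(5)[OF b(1)]) (auto simp: equilibria_iff ustable0_def not_less)
  then show ?thesis using eq_FP[OF b] tpI(3)[OF b(1)] by blast
qed

lemma glb: "is_cfg b \<Longrightarrow> ustable0 u b \<Longrightarrow>
   FM b \<in> equilibria u \<and> FM b \<le> b \<and> (\<forall>t\<in>equilibria u. t \<le> b \<longrightarrow> t \<le> FM b)"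
proof -
  assume b: "is_cfg b" "ustable0 u b"
  have "t \<le> FM b" if "t \<in> equilibria u" "t \<le> b" for t
    using that by (intro btI(5)[OF b(1)]) (auto simp: equilibria_iff dstable0_def not_less)
  then show ?thesis using eq_FM[OF b] btI(3)[OF b(1)] by blast
qed

lemma sup_A:
  assumes A: "A \<subseteq> equilibria u"
  shows "\<exists>s. is_least {t \<in> equilibria u. \<forall>a \<in> A. a \<le> t} s"
proof -
  define b :: "'v cfg" where "b = (\<lambda>i. if \<exists>a\<in>A. a i = 1 then 1 else -1)"
  have cb: "is_cfg b" by (simp add: b_def is_cfg_def)
  have ab: "a \<le> b" if "a \<in> A" for a
  proof -
    have ca: "is_cfg a" using that A by (auto simp: equilibria_iff)
    show ?thesis unfolding le_fun_def
    proof
      fix i show "a i \<le> b i"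
        using cfg_cases[OF ca, of i] that by (auto simp: b_def)
    qed
  qed
  have ds: "dstable0 u b" unfolding dstable0_def
  proof (intro allI impI)
    fix i assume "b i = 1"
    then obtain a where a: "a \<in> A" "a i = 1" by (auto simp: b_def split: if_splits)
    have ae: "a \<in> equilibria u" using a A by auto
    then have "0 \<le> D u i a" using a by (auto simp: equilibria_iff dstable0_def)
    also have "D u i a \<le> D u i b" using D_mono[OF sm cb _ ab[OF a(1)]] ae by (simp add: equilibria_iff)
    finally show "0 \<le> D u i b" .
  qed
  have bt: "b \<le> t" if "t \<in> equilibria u" "\<forall>a\<in>A. a \<le> t" for t
  proof -
    have ct: "is_cfg t" using that(1) by (simp add: equilibria_iff)
    show ?thesis unfolding le_fun_def
    proof
      fix i show "b i \<le> t i"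
      proof (cases "\<exists>a\<in>A. a i = 1")
        case True
        then obtain a where "a \<in> A" "a i = 1" by blast
        then have "a i \<le> t i" using that(2) by (metis le_funD)
        then show ?thesis using True \<open>a i = 1\<close> by (simp add: b_def)
      next
        case False
        then show ?thesis using cfg_cases[OF ct, of i] by (auto simp: b_def)
      qed
    qed
  qed
  have L: "FP b \<in> equilibria u \<and> b \<le> FP b \<and> (\<forall>t\<in>equilibria u. b \<le> t \<longrightarrow> FP b \<le> t)"
    by (rule lub[OF cb ds])
  have "is_least {t \<in> equilibria u. \<forall>a \<in> A. a \<le> t} (FP b)"
    unfolding is_least_def using L ab bt by (blast intro: order_trans)
  then show ?thesis by blast
qed

lemma inf_A:
  assumes A: "A \<subseteq> equilibria u"
  shows "\<exists>s. is_greatest {t \<in> equilibria u. \<forall>a \<in> A. t \<le> a} s"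
proof -
  define b :: "'v cfg" where "b = (\<lambda>i. if \<exists>a\<in>A. a i = -1 then -1 else 1)"
  have cb: "is_cfg b" by (simp add: b_def is_cfg_def)
  have ab: "b \<le> a" if "a \<in> A" for a
  proof -
    have ca: "is_cfg a" using that A by (auto simp: equilibria_iff)
    show ?thesis unfolding le_fun_def
    proof
      fix i show "b i \<le> a i"
        using cfg_cases[OF ca, of i] that by (auto simp: b_def)
    qed
  qed
  have us: "ustable0 u b" unfolding ustable0_def
  proof (intro allI impI)
    fix i assume "b i = -1"
    then obtain a where a: "a \<in> A" "a i = -1" by (auto simp: b_def split: if_splits)
    have ae: "a \<in> equilibria u" using a A by auto
    have "D u i b \<le> D u i a" using D_mono[OF sm _ cb ab[OF a(1)]] ae by (simp add: equilibria_iff)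
    also have "D u i a \<le> 0" using ae a by (auto simp: equilibria_iff ustable0_def)
    finally show "D u i b \<le> 0" .
  qed
  have bt: "t \<le> b" if "t \<in> equilibria u" "\<forall>a\<in>A. t \<le> a" for t
  proof -
    have ct: "is_cfg t" using that(1) by (simp add: equilibria_iff)
    show ?thesis unfolding le_fun_def
    proof
      fix i show "t i \<le> b i"
      proof (cases "\<exists>a\<in>A. a i = -1")
        case True
        then obtain a where "a \<in> A" "a i = -1" by blast
        then have "t i \<le> a i" using that(2) by (metis le_funD)
        then show ?thesis using True \<open>a i = -1\<close> by (simp add: b_def)
      next
        case False
        then show ?thesis using cfg_cases[OF ct, of i] by (auto simp: b_def)
      qed
    qed
  qed
  have L: "FM b \<in> equilibria u \<and> FM b \<le> b \<and> (\<forall>t\<in>equilibria u. t \<le> b \<longrightarrow> t \<le> FM b)"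
    by (rule glb[OF cb us])
  have "is_greatest {t \<in> equilibria u. \<forall>a \<in> A. t \<le> a} (FM b)"
    unfolding is_greatest_def using L ab bt by (blast intro: order_trans)
  then show ?thesis by blast
qed


lemma cfg_ge_m1: assumes "is_cfg t" shows "(\<lambda>_. -1) \<le> t"
  unfolding le_fun_def
proof
  fix i show "-1 \<le> t i" using cfg_cases[OF assms, of i] by auto
qed
lemma cfg_le_p1: assumes "is_cfg t" shows "t \<le> (\<lambda>_. 1)"
  unfolding le_fun_def
proof
  fix i show "t i \<le> 1" using cfg_cases[OF assms, of i] by auto
qed

lemma part_v:
  "FP (GM (\<lambda>_. -1)) = FP (\<lambda>_. -1) \<and> is_least (equilibria u) (FP (\<lambda>_. -1))
   \<and> FM (GP (\<lambda>_. 1)) = FM (\<lambda>_. 1) \<and> is_greatest (equilibria u) (FM (\<lambda>_. 1))"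
proof -
  have g1: "GM (\<lambda>_. -1) = (\<lambda>_. -1)" by (rule btB(6)[OF m1_cfg]) simp
  have g2: "GP (\<lambda>_. 1) = (\<lambda>_. 1)" by (rule tpB(6)[OF p1_cfg]) simp
  have L: "FP (\<lambda>_. -1) \<in> equilibria u \<and> (\<lambda>_. -1) \<le> FP (\<lambda>_. -1) \<and> (\<forall>t\<in>equilibria u. (\<lambda>_. -1) \<le> t \<longrightarrow> FP (\<lambda>_. -1) \<le> t)"
    by (rule lub[OF m1_cfg]) (simp add: dstable0_def)
  have G: "FM (\<lambda>_. 1) \<in> equilibria u \<and> FM (\<lambda>_. 1) \<le> (\<lambda>_. 1) \<and> (\<forall>t\<in>equilibria u. t \<le> (\<lambda>_. 1) \<longrightarrow> t \<le> FM (\<lambda>_. 1))"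
    by (rule glb[OF p1_cfg]) (simp add: ustable0_def)
  have "FP (\<lambda>_. -1) \<le> t" if t: "t \<in> equilibria u" for t
  proof -
    have "is_cfg t" using t by (simp add: equilibria_iff)
    then have "(\<lambda>_. -1) \<le> t" by (rule cfg_ge_m1)
    then show ?thesis using L t by blast
  qed
  then have lst: "is_least (equilibria u) (FP (\<lambda>_. -1))"
    using L by (simp add: is_least_def)
  have "t \<le> FM (\<lambda>_. 1)" if t: "t \<in> equilibria u" for t
  proof -
    have "is_cfg t" using t by (simp add: equilibria_iff)
    then have "t \<le> (\<lambda>_. 1)" by (rule cfg_le_p1)
    then show ?thesis using G t by blast
  qed
  then have gst: "is_greatest (equilibria u) (FM (\<lambda>_. 1))"
    using G by (simp add: is_greatest_def)
  show ?thesis using g1 g2 lst gst by simp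
qed

lemma part_vi:
  assumes xe: "x \<in> equilibria u" and ye: "y \<in> equilibria u"
  shows "is_least {z \<in> equilibria u. x \<le> z \<and> y \<le> z} (FP (sup x y))
       \<and> is_greatest {z \<in> equilibria u. z \<le> x \<and> z \<le> y} (FM (inf x y))"
proof -
  have cx: "is_cfg x" and cy: "is_cfg y" using xe ye by (auto simp: equilibria_iff)
  have cs: "is_cfg (sup x y)" by (rule cfg_sup[OF cx cy])
  have ci: "is_cfg (inf x y)" by (rule cfg_inf[OF cx cy])
  have ds: "dstable0 u (sup x y)" unfolding dstable0_def
  proof (intro allI impI)
    fix i assume "sup x y i = 1"
    then have "x i = 1 \<or> y i = 1" using cfg_cases[OF cx, of i] cfg_cases[OF cy, of i] by auto
    then show "0 \<le> D u i (sup x y)"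
    proof
      assume "x i = 1"
      then have "0 \<le> D u i x" using xe by (auto simp: equilibria_iff dstable0_def)
      also have "D u i x \<le> D u i (sup x y)" using D_mono[OF sm cs cx] by simp
      finally show ?thesis .
    next
      assume "y i = 1"
      then have "0 \<le> D u i y" using ye by (auto simp: equilibria_iff dstable0_def)
      also have "D u i y \<le> D u i (sup x y)" using D_mono[OF sm cs cy] by simp
      finally show ?thesis .
    qed
  qed
  have us: "ustable0 u (inf x y)" unfolding ustable0_def
  proof (intro allI impI)
    fix i assume "inf x y i = -1"
    then have "x i = -1 \<or> y i = -1" using cfg_cases[OF cx, of i] cfg_cases[OF cy, of i] by auto
    then show "D u i (inf x y) \<le> 0"
    proof
      assume "x i = -1"
      have "D u i (inf x y) \<le> D u i x" using D_mono[OF sm cx ci] by simp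
      also have "D u i x \<le> 0" using xe \<open>x i = -1\<close> by (auto simp: equilibria_iff ustable0_def)
      finally show ?thesis .
    next
      assume "y i = -1"
      have "D u i (inf x y) \<le> D u i y" using D_mono[OF sm cy ci] by simp
      also have "D u i y \<le> 0" using ye \<open>y i = -1\<close> by (auto simp: equilibria_iff ustable0_def)
      finally show ?thesis .
    qed
  qed
  have L: "FP (sup x y) \<in> equilibria u \<and> sup x y \<le> FP (sup x y) \<and> (\<forall>t\<in>equilibria u. sup x y \<le> t \<longrightarrow> FP (sup x y) \<le> t)"
    by (rule lub[OF cs ds])
  have G: "FM (inf x y) \<in> equilibria u \<and> FM (inf x y) \<le> inf x y \<and> (\<forall>t\<in>equilibria u. t \<le> inf x y \<longrightarrow> t \<le> FM (inf x y))"
    by (rule glb[OF ci us])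
  have "is_least {z \<in> equilibria u. x \<le> z \<and> y \<le> z} (FP (sup x y))"
    using L unfolding is_least_def by (auto intro: order_trans)
  moreover have "is_greatest {z \<in> equilibria u. z \<le> x \<and> z \<le> y} (FM (inf x y))"
    using G unfolding is_greatest_def by (auto intro: order_trans)
  ultimately show ?thesis ..
qed

lemma part_iv:
  "equilibria u \<noteq> {} \<and> complete_lattice_on (equilibria u) \<and> globally_stable (I_reach u) (equilibria u)"
proof -
  have "equilibria u \<noteq> {}" using part_i1[OF m1_cfg] by (auto simp: is_greatest_def)
  moreover have "complete_lattice_on (equilibria u)"
    unfolding complete_lattice_on_def using sup_A inf_A by blast
  moreover have "globally_reachable (I_reach u) (equilibria u)"
    unfolding globally_reachable_def using part_i1 by (auto simp: is_greatest_def)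
  moreover have "invariant (I_reach u) (equilibria u)"
    unfolding invariant_def using eq_I_reach by blast
  ultimately show ?thesis by (simp add: globally_stable_def)
qed

lemma eq_no_BRstep:
  assumes xs: "equilibria u = {xs}"
  shows "\<not> BR_step u xs z"
proof
  assume s: "BR_step u xs z"
  have xe: "xs \<in> equilibria u" using xs by simp
  have g: "GP xs = xs" using GP_eq[OF xe] xs by simp
  have g2: "GM xs = xs" using GM_eq[OF xe] xs by simp
  have cx: "is_cfg xs" using xe by (simp add: equilibria_iff)
  show False
  proof (cases "ustep u (\<lambda>d. 0 \<le> d) xs z")
    case True
    then obtain i where i: "xs i = -1" "z = xs(i:=1)" by (auto simp: ustep_def)
    have "z \<le> GP xs" using tpB(2)[OF cx] True by blast
    then have "z i \<le> xs i" using g by (metis le_funD)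
    then show False using i by simp
  next
    case False
    then have d: "dstep u (\<lambda>d. d \<le> 0) xs z" using s by (simp add: BR_step_char)
    then obtain i where i: "xs i = 1" "z = xs(i:=-1)" by (auto simp: dstep_def)
    have "GM xs \<le> z" using btB(2)[OF cx] d by blast
    then have "xs i \<le> z i" using g2 by (metis le_funD)
    then show False using i by simp
  qed
qed

lemma part_vii:
  assumes "FP (\<lambda>_. -1) = xs" "FM (\<lambda>_. 1) = xs"
  shows "equilibria u = {xs} \<and> globally_stable (BR_reach u) (equilibria u)"
proof -
  have P: "is_least (equilibria u) (FP (\<lambda>_. -1))" "is_greatest (equilibria u) (FM (\<lambda>_. 1))"
    using part_v by auto
  have E: "equilibria u = {xs}"
  proof
    show "equilibria u \<subseteq> {xs}"
      using P assms by (auto simp: is_least_def is_greatest_def intro: order.antisym)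
    show "{xs} \<subseteq> equilibria u" using P assms by (auto simp: is_least_def)
  qed
  have inv: "z = xs" if "BR_reach u xs z" for z
    using that unfolding BR_reach_def
    by (induction rule: rtranclp_induct) (use eq_no_BRstep[OF E] in auto)
  have "globally_reachable (BR_reach u) (equilibria u)"
    unfolding globally_reachable_def using part_ii1 by (auto simp: is_greatest_def)
  moreover have "invariant (BR_reach u) (equilibria u)"
    unfolding invariant_def E using inv by simp
  ultimately show ?thesis using E by (simp add: globally_stable_def)
qed

end

theorem proposition2:
  fixes u :: "('v::finite) game"
  assumes "supermodular u"
  shows
   "(\<forall>x. is_cfg x \<longrightarrow>
       ((is_greatest {z \<in> equilibria u. I_reach u x z} (f_minus u (f_plus u x))
         \<and> is_least {z \<in> equilibria u. I_reach u x z} (f_plus u (f_minus u x)))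
      \<and> (is_greatest {z \<in> equilibria u. BR_reach u x z} (f_minus u (g_plus u x))
         \<and> is_least {z \<in> equilibria u. BR_reach u x z} (f_plus u (g_minus u x)))
      \<and> (x \<in> equilibria u \<longrightarrow>
           is_greatest {z \<in> equilibria u. BR_reach u x z} (g_plus u x)
         \<and> is_least {z \<in> equilibria u. BR_reach u x z} (g_minus u x))))
    \<and> (equilibria u \<noteq> {} \<and> complete_lattice_on (equilibria u)
       \<and> globally_stable (I_reach u) (equilibria u))
    \<and> (f_plus u (g_minus u (\<lambda>_. -1)) = f_plus u (\<lambda>_. -1)
       \<and> is_least (equilibria u) (f_plus u (\<lambda>_. -1))
       \<and> f_minus u (g_plus u (\<lambda>_. 1)) = f_minus u (\<lambda>_. 1)
       \<and> is_greatest (equilibria u) (f_minus u (\<lambda>_. 1)))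
    \<and> (\<forall>x \<in> equilibria u. \<forall>y \<in> equilibria u.
         is_least {z \<in> equilibria u. x \<le> z \<and> y \<le> z} (f_plus u (sup x y))
       \<and> is_greatest {z \<in> equilibria u. z \<le> x \<and> z \<le> y} (f_minus u (inf x y)))
    \<and> (\<forall>xs. f_plus u (\<lambda>_. -1) = xs \<and> f_minus u (\<lambda>_. 1) = xs \<longrightarrow>
         equilibria u = {xs} \<and> globally_stable (BR_reach u) (equilibria u))"
  unfolding f_plus_eq f_minus_eq g_plus_eq g_minus_eq
  apply (intro conjI allI impI ballI)
  using part_i1[OF assms] part_i2[OF assms] part_ii1[OF assms] part_ii2[OF assms]
    part_iii1[OF assms] part_iii2[OF assms] part_iv[OF assms] part_v[OF assms]
    part_vi[OF assms] part_vii[OF assms]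
  by auto

end
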